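(* Let $H=\left(\frac{3,-1}{\mathbb{Q}}\right)$ and let $d>0$ be a square-free integer for which the set $S_d=\{xI+yJ+zK: (x,y,z)\in\mathbb{Z}^3,\ 3x^2-y^2+3z^2=d\}$ is infinite. Let $\varphi_d:\mathbb{N}\to S_d$ be a bijection, and let $a,b>0$ be rational numbers such that $a+b\sqrt{d}$ is a unit of $\mathbb{Q}(\sqrt d)$ of infinite order. Define $\psi_d:\mathbb{N}^2\to H$ by $\psi_d(t,m)=\left(a+b\,\varphi_d(t)\right)^m$. Then the restriction of $\psi_d$ to $\mathbb{N}\times(\mathbb{N}\setminus\{0\})$ is injective.
   Context: $\mathbb{N}=\{0,1,2,\dots\}$. $H=\left(\frac{3,-1}{\mathbb{Q}}\right)$ is the quaternion $\mathbb{Q}$-algebra with basis $1,I,J,K=IJ$ and relations $I^2=3$, $J^2=-1$, $IJ=-JI$; the reduced norm of $x_0+xI+yJ+zK$ is $x_0^2-3x^2+y^2-3z^2$. Elements $xI+yJ+zK$ are called pure quaternions; a pure quaternion $\omega\in S_d$ has reduced norm $-d$ and satisfies $\omega^2=d$. *)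

theory Defs
  imports Complex_Main "HOL-Computational_Algebra.Squarefree"
begin

text \<open>The quaternion algebra H = (3,-1 / Q) with basis 1, I, J, K = IJ,
  I^2 = 3, J^2 = -1, IJ = -JI.  An element HQ x0 x y z stands for
  x0 + x I + y J + z K.\<close>

datatype hquat = HQ rat rat rat rat

fun hq_mult :: "hquat \<Rightarrow> hquat \<Rightarrow> hquat" where
  "hq_mult (HQ a0 a1 a2 a3) (HQ b0 b1 b2 b3) =
     HQ (a0*b0 + 3*a1*b1 - a2*b2 + 3*a3*b3)
        (a0*b1 + a1*b0 + a2*b3 - a3*b2)
        (a0*b2 + a2*b0 + 3*a1*b3 - 3*a3*b1)
        (a0*b3 + a3*b0 + a1*b2 - a2*b1)"

definition hq_one :: hquat where "hq_one = HQ 1 0 0 0"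

primrec hq_pow :: "hquat \<Rightarrow> nat \<Rightarrow> hquat" where
  "hq_pow q 0 = hq_one"
| "hq_pow q (Suc n) = hq_mult q (hq_pow q n)"

fun hq_norm :: "hquat \<Rightarrow> rat" where
  "hq_norm (HQ x0 x y z) = x0^2 - 3*x^2 + y^2 - 3*z^2"

definition hq_scalar :: "rat \<Rightarrow> hquat" where "hq_scalar c = HQ c 0 0 0"

fun hq_add :: "hquat \<Rightarrow> hquat \<Rightarrow> hquat" where
  "hq_add (HQ a0 a1 a2 a3) (HQ b0 b1 b2 b3) = HQ (a0+b0) (a1+b1) (a2+b2) (a3+b3)"

fun hq_smult :: "rat \<Rightarrow> hquat \<Rightarrow> hquat" where
  "hq_smult c (HQ a0 a1 a2 a3) = HQ (c*a0) (c*a1) (c*a2) (c*a3)"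

definition S :: "int \<Rightarrow> hquat set" where
  "S d = {HQ 0 (of_int x) (of_int y) (of_int z) | x y z :: int.
            3*x^2 - y^2 + 3*z^2 = d}"

definition infinite_order_qsqrt :: "int \<Rightarrow> rat \<Rightarrow> rat \<Rightarrow> bool" where
  "infinite_order_qsqrt d a b \<longleftrightarrow>
     (of_rat a + of_rat b * sqrt (of_int d) :: real) \<noteq> 0 \<and>
     (\<forall>m::nat. m > 0 \<longrightarrow> (of_rat a + of_rat b * sqrt (of_int d) :: real) ^ m \<noteq> 1)"

end

theory Submission
  imports Defs
begin

fun AB :: "rat \<Rightarrow> rat \<Rightarrow> rat \<Rightarrow> nat \<Rightarrow> rat \<times> rat" where
  "AB a b d 0 = (1, 0)"
| "AB a b d (Suc m) = (a * fst (AB a b d m) + d * b * snd (AB a b d m),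
                       a * snd (AB a b d m) + b * fst (AB a b d m))"

lemma pow_formula:
  assumes "3*x^2 - y^2 + 3*z^2 = dd"
  shows "hq_pow (HQ a (b*x) (b*y) (b*z)) m =
     HQ (fst (AB a b dd m)) (snd (AB a b dd m) * x) (snd (AB a b dd m) * y) (snd (AB a b dd m) * z)"
proof (induction m)
  case 0
  then show ?case by (simp add: hq_one_def)
next
  case (Suc m)
  have e: "3 * b * x * (B * x) - b * y * (B * y) + 3 * b * z * (B * z) = dd * b * B" for B
  proof -
    have "3 * b * x * (B * x) - b * y * (B * y) + 3 * b * z * (B * z) = (3*x^2 - y^2 + 3*z^2) * b * B"
      by (simp add: algebra_simps power2_eq_square)
    then show ?thesis using assms by simp
  qed
  show ?case using Suc
    apply (simp only: hq_pow.simps AB.simps fst_conv snd_conv hq_mult.simps)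
    apply (simp only: hquat.inject)
    using e[of "snd (AB a b dd m)"] by (simp add: algebra_simps)
qed

lemma real_formula:
  assumes "(d::int) > 0"
  shows "(of_rat a + of_rat b * sqrt (of_int d) :: real) ^ m =
     of_rat (fst (AB a b (of_int d) m)) + of_rat (snd (AB a b (of_int d) m)) * sqrt (of_int d)"
proof (induction m)
  case 0
  then show ?case by simp
next
  case (Suc m)
  have s: "sqrt (of_int d) * sqrt (of_int d) = (of_int d :: real)" using assms by simp
  define A where "A = fst (AB a b (of_int d) m)"
  define B where "B = snd (AB a b (of_int d) m)"
  have "(of_rat a + of_rat b * sqrt (of_int d) :: real) ^ Suc m =
     (of_rat a + of_rat b * sqrt (of_int d)) * (of_rat A + of_rat B * sqrt (of_int d))"
    using Suc by (simp add: A_def B_def)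
  also have "\<dots> = of_rat a * of_rat A + of_rat b * of_rat B * (sqrt (of_int d) * sqrt (of_int d))
      + (of_rat a * of_rat B + of_rat b * of_rat A) * sqrt (of_int d)"
    by (simp add: algebra_simps)
  also have "\<dots> = of_rat (a * A + of_int d * b * B) + of_rat (a * B + b * A) * sqrt (of_int d)"
    unfolding s by (simp add: of_rat_add of_rat_mult of_rat_of_int_eq algebra_simps)
  finally show ?case by (simp add: A_def B_def)
qed

lemma AB_pos:
  assumes "a > 0" "b > 0" "dd > 0"
  shows "fst (AB a b dd m) > 0 \<and> snd (AB a b dd m) \<ge> 0 \<and> (m > 0 \<longrightarrow> snd (AB a b dd m) > 0)"
proof (induction m)
  case 0
  then show ?case by simp
next
  case (Suc m)
  then have A: "fst (AB a b dd m) > 0" and B: "snd (AB a b dd m) \<ge> 0" by auto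
  have 1: "a * fst (AB a b dd m) + dd * b * snd (AB a b dd m) > 0"
    using A B assms by (intro add_pos_nonneg) auto
  have 2: "a * snd (AB a b dd m) + b * fst (AB a b dd m) > 0"
    using A B assms by (intro add_nonneg_pos) auto
  show ?case using 1 2 by simp
qed

theorem mainTheorem4:
  fixes d :: int and a b :: rat and \<phi> :: "nat \<Rightarrow> hquat" and \<psi> :: "nat \<times> nat \<Rightarrow> hquat"
  assumes "d > 0" and "squarefree d"
    and "infinite (S d)"
    and "bij_betw \<phi> UNIV (S d)"
    and "a > 0" and "b > 0"
    and "infinite_order_qsqrt d a b"
    and "\<And>t m. \<psi> (t, m) = hq_pow (hq_add (hq_scalar a) (hq_smult b (\<phi> t))) m"
  shows "inj_on \<psi> (UNIV \<times> {m. m \<noteq> 0})"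
proof (rule inj_onI)
  fix p q
  assume pq: "p \<in> UNIV \<times> {m. m \<noteq> 0}" "q \<in> UNIV \<times> {m. m \<noteq> 0}" "\<psi> p = \<psi> q"
  obtain t1 m where pdef: "p = (t1, m)" by (cases p)
  obtain t2 n where qdef: "q = (t2, n)" by (cases q)
  have mn: "m \<noteq> 0" "n \<noteq> 0" using pq pdef qdef by auto
  have eq: "\<psi> (t1, m) = \<psi> (t2, n)" using pq pdef qdef by simp
  define dd where "dd = (of_int d :: rat)"
  have ddpos: "dd > 0" using assms(1) by (simp add: dd_def)
  have inS: "\<phi> t \<in> S d" for t using assms(4) by (auto simp: bij_betw_def)
  obtain x1 y1 z1 :: int where p1: "\<phi> t1 = HQ 0 (of_int x1) (of_int y1) (of_int z1)"
    and c1: "3*x1^2 - y1^2 + 3*z1^2 = d" using inS[of t1] by (auto simp: S_def)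
  obtain x2 y2 z2 :: int where p2: "\<phi> t2 = HQ 0 (of_int x2) (of_int y2) (of_int z2)"
    and c2: "3*x2^2 - y2^2 + 3*z2^2 = d" using inS[of t2] by (auto simp: S_def)
  have c1': "3*(of_int x1::rat)^2 - (of_int y1)^2 + 3*(of_int z1)^2 = dd"
    unfolding dd_def using c1 by (metis (mono_tags) of_int_add of_int_diff of_int_mult of_int_numeral of_int_power)
  have c2': "3*(of_int x2::rat)^2 - (of_int y2)^2 + 3*(of_int z2)^2 = dd"
    unfolding dd_def using c2 by (metis (mono_tags) of_int_add of_int_diff of_int_mult of_int_numeral of_int_power)
  define Am where "Am = fst (AB a b dd m)"
  define Bm where "Bm = snd (AB a b dd m)"
  define An where "An = fst (AB a b dd n)"
  define Bn where "Bn = snd (AB a b dd n)"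
  have Bmp: "Bm > 0" using AB_pos[OF assms(5,6) ddpos, of m] mn by (simp add: Bm_def)
  have Bnp: "Bn > 0" using AB_pos[OF assms(5,6) ddpos, of n] mn by (simp add: Bn_def)
  have h1: "\<psi> (t1, m) = HQ Am (Bm * of_int x1) (Bm * of_int y1) (Bm * of_int z1)"
    using pow_formula[OF c1', of a b m] by (simp add: assms(8) p1 hq_scalar_def Am_def Bm_def)
  have h2: "\<psi> (t2, n) = HQ An (Bn * of_int x2) (Bn * of_int y2) (Bn * of_int z2)"
    using pow_formula[OF c2', of a b n] by (simp add: assms(8) p2 hq_scalar_def An_def Bn_def)
  have E: "Am = An" "Bm * of_int x1 = Bn * of_int x2" "Bm * of_int y1 = Bn * of_int y2"
     "Bm * of_int z1 = Bn * of_int z2" using eq h1 h2 by auto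
  have "Bm^2 * dd = 3*(Bm * of_int x1)^2 - (Bm * of_int y1)^2 + 3*(Bm * of_int z1)^2"
  proof -
    have "3*(Bm * of_int x1)^2 - (Bm * of_int y1)^2 + 3*(Bm * of_int z1)^2
        = Bm^2 * (3*(of_int x1::rat)^2 - (of_int y1)^2 + 3*(of_int z1)^2)"
      by (simp add: algebra_simps power_mult_distrib)
    then show ?thesis using c1' by simp
  qed
  also have "\<dots> = 3*(Bn * of_int x2)^2 - (Bn * of_int y2)^2 + 3*(Bn * of_int z2)^2"
    using E by simp
  also have "\<dots> = Bn^2 * dd"
  proof -
    have "3*(Bn * of_int x2)^2 - (Bn * of_int y2)^2 + 3*(Bn * of_int z2)^2
        = Bn^2 * (3*(of_int x2::rat)^2 - (of_int y2)^2 + 3*(of_int z2)^2)"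
      by (simp add: algebra_simps power_mult_distrib)
    then show ?thesis using c2' by simp
  qed
  finally have "Bm^2 = Bn^2" using ddpos by simp
  hence BB: "Bm = Bn" using Bmp Bnp by (simp add: power2_eq_iff)
  have "x1 = x2" "y1 = y2" "z1 = z2" using E BB Bmp by auto
  hence "\<phi> t1 = \<phi> t2" using p1 p2 by simp
  hence T: "t1 = t2" using assms(4) by (auto simp: bij_betw_def inj_def)
  define u where "u = (of_rat a + of_rat b * sqrt (of_int d) :: real)"
  have um: "u ^ m = u ^ n"
    using real_formula[OF assms(1), of a b m] real_formula[OF assms(1), of a b n] E(1) BB
    by (simp add: u_def Am_def An_def Bm_def Bn_def dd_def)
  have u0: "u \<noteq> 0" and u1: "\<And>k. k > 0 \<Longrightarrow> u ^ k \<noteq> 1"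
    using assms(7) by (auto simp: infinite_order_qsqrt_def u_def)
  have "m = n"
  proof (rule ccontr)
    assume "m \<noteq> n"
    then consider "m < n" | "n < m" by linarith
    then show False
    proof cases
      case 1
      have "u ^ n = u ^ m * u ^ (n - m)" using 1 by (simp add: power_add[symmetric])
      then have "u ^ (n - m) = 1" using um u0 by simp
      then show False using u1[of "n-m"] 1 by simp
    next
      case 2
      have "u ^ m = u ^ n * u ^ (m - n)" using 2 by (simp add: power_add[symmetric])
      then have "u ^ (m - n) = 1" using um u0 by simp
      then show False using u1[of "m-n"] 2 by simp
    qed
  qed
  then show "p = q" using T pdef qdef by simp
qed

end
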